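(* Let $b_0,g_3,z_0$ be complex constants and let $R(z)=\wp(z-z_0;0,g_3)$, so that $R_z^2=4R^3-g_3$. Then the function $$y(z)=-b_0+\frac{R_z}{R}$$ is a solution of the second order ordinary differential equation $$y_{zz}+yy_z-y^3+b_0y_z-3b_0y^2-3b_0^2y-b_0^3=0 .$$
   Context: $\wp(z;g_2,g_3)$ denotes the Weierstrass elliptic function with invariants $g_2,g_3$, the general solution (up to translation of $z$) of $R_z^2-4R^3+g_2R+g_3=0$; subscripts $z$ denote derivatives with respect to $z$. *)

theory Defs
  imports "HOL-Complex_Analysis.Complex_Analysis"
begin

text \<open>Weierstrass-p with invariants g2, g3 is characterised (up to translation) as a
solution of the first-order equation R'^2 = 4 R^3 - g2 R - g3.\<close>

definition weierstrass_sol :: "complex \<Rightarrow> complex \<Rightarrow> (complex \<Rightarrow> complex) \<Rightarrow> complex set \<Rightarrow> bool" where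
  "weierstrass_sol g2 g3 P S \<longleftrightarrow> open S \<and> P holomorphic_on S \<and>
     (\<forall>w\<in>S. (deriv P w)^2 = 4 * (P w)^3 - g2 * P w - g3)"

end

theory Submission
  imports Defs
begin

lemma deriv_eq_open:
  assumes "open T" "p \<in> T" "\<And>w. w \<in> T \<Longrightarrow> f w = g w"
  shows "deriv f p = deriv g p"
  by (rule deriv_cong_ev[OF _ refl]) (use assms in \<open>auto simp: eventually_nhds\<close>)

lemma lemA:
  fixes f :: "complex \<Rightarrow> complex"
  assumes hol: "f holomorphic_on S" and S: "open S" and p: "p \<in> S"
    and eq: "\<And>w. w \<in> S \<Longrightarrow> (deriv f w)^2 = 4 * (f w)^3 - g3"
  shows "deriv (deriv (deriv f)) p * f p = 2 * deriv f p * deriv (deriv f) p"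
proof -
  define f1 where "f1 = deriv f"
  define f2 where "f2 = deriv f1"
  define f3 where "f3 = deriv f2"
  have h1: "f1 holomorphic_on S" unfolding f1_def using hol S by (intro holomorphic_intros)
  have h2: "f2 holomorphic_on S" unfolding f2_def using h1 S by (intro holomorphic_intros)
  have d0: "(f has_field_derivative f1 w) (at w)" if "w \<in> S" for w
    unfolding f1_def using holomorphic_derivI[OF hol S that] .
  have d1: "(f1 has_field_derivative f2 w) (at w)" if "w \<in> S" for w
    unfolding f2_def using holomorphic_derivI[OF h1 S that] .
  have d2: "(f2 has_field_derivative f3 w) (at w)" if "w \<in> S" for w
    unfolding f3_def using holomorphic_derivI[OF h2 S that] .
  have key: "f1 w * (f2 w - 6 * (f w)^2) = 0" if w: "w \<in> S" for w
  proof -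
    have "((\<lambda>w. (f1 w)^2 - 4 * (f w)^3 + g3) has_field_derivative
           (2 * f1 w * f2 w - 12 * (f w)^2 * f1 w)) (at w)"
      using d0[OF w] d1[OF w]
      by (auto intro!: derivative_eq_intros simp: algebra_simps)
    moreover have "((\<lambda>w. (f1 w)^2 - 4 * (f w)^3 + g3) has_field_derivative 0) (at w)"
      by (rule has_field_derivative_transform_within_open[OF DERIV_const S w])
         (simp add: eq f1_def)
    ultimately have "2 * f1 w * f2 w - 12 * (f w)^2 * f1 w = 0"
      using DERIV_unique by blast
    then show ?thesis by (simp add: algebra_simps)
  qed
  obtain r where r: "r > 0" "ball p r \<subseteq> S" using S p open_contains_ball by blast
  define B where "B = ball p r"
  have B: "open B" "connected B" "B \<subseteq> S" "p \<in> B" using r by (auto simp: B_def)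
  show ?thesis
  proof (cases "\<forall>w\<in>B. f1 w = 0")
    case True
    have "\<forall>w\<in>B. f2 w = 0"
    proof
      fix w assume "w \<in> B"
      have "f2 w = deriv (\<lambda>_. 0) w" unfolding f2_def
        by (rule deriv_eq_open[OF B(1) \<open>w \<in> B\<close>]) (use True in auto)
      then show "f2 w = 0" by simp
    qed
    then have "f3 p = deriv (\<lambda>_. 0) p" unfolding f3_def
      by (intro deriv_eq_open[OF B(1) B(4)]) auto
    then show ?thesis using True B(4) by (simp add: f1_def[symmetric] f2_def[symmetric] f3_def[symmetric])
  next
    case False
    then obtain w0 where w0: "w0 \<in> B" "f1 w0 \<noteq> 0" by auto
    have "continuous_on S f1" using h1 holomorphic_on_imp_continuous_on by blast
    then have "isCont f1 w0" using B w0 S continuous_on_eq_continuous_at by blast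
    then obtain e where e: "e > 0" "\<And>x. dist w0 x < e \<Longrightarrow> f1 x \<noteq> 0"
      using continuous_at_avoid[of w0 f1 0] w0(2) by (auto simp: isCont_def continuous_at)
    obtain e2 where e2: "e2 > 0" "ball w0 e2 \<subseteq> B" using B(1) w0(1) open_contains_ball by blast
    define U where "U = ball w0 (min e e2)"
    have g0: "f2 w - 6 * (f w)^2 = 0" if "w \<in> B" for w
    proof (rule analytic_continuation_open[of U B "\<lambda>w. f2 w - 6 * (f w)^2" "\<lambda>_. 0"])
      show "open U" "open B" "connected B" using B by (auto simp: U_def)
      show "U \<noteq> {}" using e e2 by (auto simp: U_def)
      show "U \<subseteq> B" using e2 by (auto simp: U_def)
      show "(\<lambda>w. f2 w - 6 * (f w)^2) holomorphic_on B"
        using h2 hol B(3) by (intro holomorphic_intros) (auto intro: holomorphic_on_subset)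
      show "(\<lambda>_. 0) holomorphic_on B" by (intro holomorphic_intros)
      show "w \<in> B" by fact
      fix z assume z: "z \<in> U"
      then have "f1 z \<noteq> 0" using e by (auto simp: U_def)
      moreover have "z \<in> S" using z e2 B by (auto simp: U_def)
      ultimately show "f2 z - 6 * (f z)^2 = 0" using key by auto
    qed
    have "((\<lambda>w. 6 * (f w)^2) has_field_derivative 12 * f p * f1 p) (at p)"
      using d0[OF p] by (auto intro!: derivative_eq_intros)
    then have "((f2) has_field_derivative 12 * f p * f1 p) (at p)"
      by (rule has_field_derivative_transform_within_open[OF _ B(1) B(4)]) (use g0 in auto)
    then have "f3 p = 12 * f p * f1 p" using d2[OF p] DERIV_unique by blast
    moreover have "f2 p = 6 * (f p)^2" using g0 B(4) by auto
    ultimately show ?thesis by (simp add: f1_def[symmetric] f2_def[symmetric] f3_def[symmetric] power2_eq_square)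
  qed
qed
lemma alg:
  fixes a b c d b0 :: complex
  assumes "a \<noteq> 0" "d = 2 * b * c / a"
  shows "((d * a + c * b - c * b - b * c) * a^2 - (c * a - b * b) * (2 * a * b)) / (a^2)^2
     + (-b0 + b/a) * ((c * a - b * b) / a^2) - (-b0 + b/a)^3 + b0 * ((c * a - b * b) / a^2)
     - 3 * b0 * (-b0 + b/a)^2 - 3 * b0^2 * (-b0 + b/a) - b0^3 = 0"
  using assms(1) unfolding assms(2)
  by (simp add: field_simps) algebra

lemma lemB:
  fixes F :: "complex \<Rightarrow> complex" and b0 :: complex
  assumes hol: "F holomorphic_on T" and T: "open T" and z: "z \<in> T" and nz: "F z \<noteq> 0"
    and rel: "deriv (deriv (deriv F)) z * F z = 2 * deriv F z * deriv (deriv F) z"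
  defines "y \<equiv> (\<lambda>w. - b0 + deriv F w / F w)"
  shows "deriv (deriv y) z + y z * deriv y z - (y z)^3 + b0 * deriv y z
           - 3 * b0 * (y z)^2 - 3 * b0^2 * y z - b0^3 = 0"
proof -
  define F1 where "F1 = deriv F"
  define F2 where "F2 = deriv F1"
  define F3 where "F3 = deriv F2"
  have h1: "F1 holomorphic_on T" unfolding F1_def using hol T by (intro holomorphic_intros)
  have h2: "F2 holomorphic_on T" unfolding F2_def using h1 T by (intro holomorphic_intros)
  have d0: "(F has_field_derivative F1 w) (at w)" if "w \<in> T" for w
    unfolding F1_def using holomorphic_derivI[OF hol T that] .
  have d1: "(F1 has_field_derivative F2 w) (at w)" if "w \<in> T" for w
    unfolding F2_def using holomorphic_derivI[OF h1 T that] .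
  have d2: "(F2 has_field_derivative F3 w) (at w)" if "w \<in> T" for w
    unfolding F3_def using holomorphic_derivI[OF h2 T that] .
  have "continuous_on T F" using hol holomorphic_on_imp_continuous_on by blast
  then have "isCont F z" using z T continuous_on_eq_continuous_at by blast
  then obtain e where e: "e > 0" "\<And>x. dist z x < e \<Longrightarrow> F x \<noteq> 0"
    using continuous_at_avoid[of z F 0] nz by (auto simp: isCont_def continuous_at)
  obtain e2 where e2: "e2 > 0" "ball z e2 \<subseteq> T" using T z open_contains_ball by blast
  define V where "V = ball z (min e e2)"
  have V: "open V" "z \<in> V" "V \<subseteq> T" "\<And>w. w \<in> V \<Longrightarrow> F w \<noteq> 0"
    using e e2 by (auto simp: V_def)
  define Y1 where "Y1 = (\<lambda>w. (F2 w * F w - F1 w * F1 w) / (F w)^2)"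
  have dy: "deriv y w = Y1 w" if w: "w \<in> V" for w
  proof -
    have wT: "w \<in> T" using V w by auto
    have "(y has_field_derivative Y1 w) (at w)"
      unfolding y_def F1_def[symmetric] Y1_def
      using d0[OF wT] d1[OF wT] V(4)[OF w]
      by (auto intro!: derivative_eq_intros simp: field_simps power2_eq_square)
    then show ?thesis by (rule DERIV_imp_deriv)
  qed
  have "(Y1 has_field_derivative
        ((F3 z * F z + F2 z * F1 z - F2 z * F1 z - F1 z * F2 z) * (F z)^2
          - (F2 z * F z - F1 z * F1 z) * (2 * F z * F1 z)) / ((F z)^2)^2) (at z)"
    unfolding Y1_def using d0[OF z] d1[OF z] d2[OF z] nz
    by (auto intro!: derivative_eq_intros simp: power2_eq_square)
  then have "(deriv y has_field_derivative
        ((F3 z * F z + F2 z * F1 z - F2 z * F1 z - F1 z * F2 z) * (F z)^2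
          - (F2 z * F z - F1 z * F1 z) * (2 * F z * F1 z)) / ((F z)^2)^2) (at z)"
    by (rule has_field_derivative_transform_within_open[OF _ V(1) V(2)]) (use dy in auto)
  then have ddy: "deriv (deriv y) z = ((F3 z * F z + F2 z * F1 z - F2 z * F1 z - F1 z * F2 z) * (F z)^2
          - (F2 z * F z - F1 z * F1 z) * (2 * F z * F1 z)) / ((F z)^2)^2"
    by (rule DERIV_imp_deriv)
  have rel': "F3 z * F z = 2 * F1 z * F2 z" using rel by (simp add: F1_def F2_def F3_def)
  have yz: "y z = -b0 + F1 z / F z" by (simp add: y_def F1_def)
  have d3: "F3 z = 2 * F1 z * F2 z / F z" using rel' nz by (simp add: field_simps)
  show ?thesis
    unfolding ddy dy[OF V(2)] yz Y1_def using alg[OF nz d3] by simp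
qed
theorem mainTheorem2:
  fixes b0 g3 z0 :: complex and P :: "complex \<Rightarrow> complex" and S :: "complex set"
    and z :: complex
  assumes "weierstrass_sol 0 g3 P S"
    and "z - z0 \<in> S" and "P (z - z0) \<noteq> 0"
  defines "R \<equiv> (\<lambda>w. P (w - z0))"
  defines "y \<equiv> (\<lambda>w. - b0 + deriv R w / R w)"
  shows "deriv (deriv y) z + y z * deriv y z - (y z)^3 + b0 * deriv y z
           - 3 * b0 * (y z)^2 - 3 * b0^2 * y z - b0^3 = 0"
proof -
  have S: "open S" and hol: "P holomorphic_on S"
    and eq: "\<And>w. w \<in> S \<Longrightarrow> (deriv P w)^2 = 4 * (P w)^3 - g3"
    using assms(1) by (auto simp: weierstrass_sol_def)
  define T where "T = (\<lambda>w. w - z0) -` S"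
  have T: "open T" unfolding T_def
    by (rule continuous_open_vimage[OF S]) (auto intro: continuous_intros)
  have zT: "z \<in> T" using assms(2) by (simp add: T_def)
  have holR: "R holomorphic_on T" unfolding R_def T_def
    by (rule holomorphic_on_compose_gen[of "\<lambda>w. w - z0" _ P S, unfolded o_def])
       (use hol in \<open>auto intro: holomorphic_intros\<close>)
  have dR: "deriv R w = deriv P (w - z0)" if "w \<in> T" for w
  proof -
    have "(P has_field_derivative deriv P (w - z0)) (at (w - z0))"
      using holomorphic_derivI[OF hol S] that by (auto simp: T_def)
    then have "((\<lambda>w. P (w - z0)) has_field_derivative deriv P (w - z0) * 1) (at w)"
      by (rule DERIV_chain2[OF _ ]) (auto intro!: derivative_eq_intros)
    then show ?thesis unfolding R_def by (simp add: DERIV_imp_deriv)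
  qed
  have eqR: "(deriv R w)^2 = 4 * (R w)^3 - g3" if "w \<in> T" for w
    using dR[OF that] eq that by (auto simp: T_def R_def)
  have rel: "deriv (deriv (deriv R)) z * R z = 2 * deriv R z * deriv (deriv R) z"
    by (rule lemA[OF holR T zT eqR])
  show ?thesis unfolding y_def
    by (rule lemB[OF holR T zT _ rel]) (use assms(3) in \<open>simp add: R_def\<close>)
qed
end
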